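(* Fix an integer $q\ge2$, $c\in\mathbb{R}$ and $\lambda\in(-1/q-c,-c)$ such that $f_c$ satisfies the pre-$q$-Sturmian condition for $\lambda$, with Lipschitz function $\psi$ and constant $\beta$; regard $\psi$ as a $1$-periodic function on $\mathbb{R}$. Let $\theta=\lambda+1/q+c\in(0,1/q)$ and $f=f_0$. Then: (i) For any $\lambda+q^{-1}\le x<y\le\lambda+1$: $\psi(y)-\psi(x)\le f\left(q^{-1}-\theta-\frac{y-x}{q-1}\right)-f(q^{-1}-\theta)\le f(0)-f(q^{-1}-\theta)$. (i)' For any $\lambda+q^{-1}-1\le y<x\le\lambda$: $\psi(y)-\psi(x)\le f\left(\theta-\frac{x-y}{q-1}\right)-f(\theta)\le f(0)-f(\theta)$. (ii) For any $x<y$ with $y-x<1$: $\psi(y)-\psi(x)\le f\left(q^{-1}-\theta-\frac{y-x}{q}\right)-f(q^{-1}-\theta)-f'(q^{-1}-\theta)\frac{y-x}{q(q-1)}\le -f'(q^{-1}-\theta)\frac{y-x}{q-1}$. (ii)' For any $y<x$ with $x-y<1$: $\psi(y)-\psi(x)\le f\left(\theta-\frac{x-y}{q}\right)-f(\theta)-f'(\theta)\frac{x-y}{q(q-1)}\le -f'(\theta)\frac{x-y}{q-1}$.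
   Context: $\mathbb{T}=\mathbb{R}/\mathbb{Z}$, $T(x)=qx\bmod1$. $f_0(x)=\log\left|\frac{\sin\pi qx}{\sin\pi x}\right|$ (value $\log q$ at integers), a $1$-periodic even function, real-analytic and strictly concave on $(-1/q,1/q)$ with maximum at $0$; $f_c(x)=f_0(x+c)$. $C_\lambda=[\lambda,\lambda+1/q]\bmod1$. The function $f_c$ satisfies the pre-$q$-Sturmian condition for $\lambda$ if $f_c$ is Lipschitz on $C_\lambda$ and there exist a Lipschitz $\psi:\mathbb{T}\to\mathbb{R}$ and $\beta\in\mathbb{R}$ with $f_c(x)+\psi(x)-\psi(Tx)=\beta$ for all $x\in C_\lambda$. *)

theory Defs
  imports "HOL-Analysis.Analysis"
begin

text \<open>Functions on the circle R/Z are represented as 1-periodic functions on R.\<close>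

definition f0 :: "nat \<Rightarrow> real \<Rightarrow> real" where
  "f0 q x = (if x \<in> \<int> then ln (real q)
             else ln \<bar>sin (pi * real q * x) / sin (pi * x)\<bar>)"

definition fc :: "nat \<Rightarrow> real \<Rightarrow> real \<Rightarrow> real" where
  "fc q c x = f0 q (x + c)"

definition Tmap :: "nat \<Rightarrow> real \<Rightarrow> real" where
  "Tmap q x = frac (real q * x)"

definition Carc :: "nat \<Rightarrow> real \<Rightarrow> real set" where
  "Carc q lam = {x. \<exists>k::int. x - of_int k \<in> {lam .. lam + 1 / real q}}"

text \<open>Lipschitz continuity of f_c on the
  arc C_lambda (of length 1/q <= 1/2, so circle distance = real distance) is
  stated on the real interval [lambda, lambda+1/q].\<close>
definition pre_sturmian_with ::
    "nat \<Rightarrow> real \<Rightarrow> real \<Rightarrow> (real \<Rightarrow> real) \<Rightarrow> real \<Rightarrow> bool" where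
  "pre_sturmian_with q c lam \<psi> \<beta> \<longleftrightarrow>
     (\<exists>L. L-lipschitz_on {lam .. lam + 1 / real q} (fc q c)) \<and>
     (\<forall>x. \<psi> (x + 1) = \<psi> x) \<and>
     (\<exists>L. L-lipschitz_on UNIV \<psi>) \<and>
     (\<forall>x\<in>Carc q lam. fc q c x + \<psi> x - \<psi> (Tmap q x) = \<beta>)"

end

theory Submission
  imports Defs
begin


fun Dq :: "nat \<Rightarrow> real \<Rightarrow> real" where
  "Dq 0 t = 0"
| "Dq (Suc 0) t = 1"
| "Dq (Suc (Suc n)) t = 2 * cos t * Dq (Suc n) t - Dq n t"

fun Dq' :: "nat \<Rightarrow> real \<Rightarrow> real" where
  "Dq' 0 t = 0"
| "Dq' (Suc 0) t = 0"
| "Dq' (Suc (Suc n)) t = - 2 * sin t * Dq (Suc n) t + 2 * cos t * Dq' (Suc n) t - Dq' n t"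

lemma Dq_sin: "sin (real n * t) = sin t * Dq n t"
proof (induction n t rule: Dq.induct)
  case (3 n t)
  have e: "sin (real (Suc (Suc n)) * t) = 2 * cos t * sin (real (Suc n) * t) - sin (real n * t)"
  proof -
    define A where "A = real (Suc n) * t"
    have 1: "real (Suc (Suc n)) * t = A + t" by (simp add: A_def algebra_simps)
    have 2: "real n * t = A - t" by (simp add: A_def algebra_simps)
    show ?thesis unfolding 1 2 A_def[symmetric] sin_add sin_diff by (simp add: algebra_simps)
  qed
  show ?case using 3 e by (simp add: algebra_simps)
qed auto

lemma Dq_deriv: "(Dq n has_real_derivative Dq' n t) (at t)"
proof (induction n t rule: Dq.induct)
  case (3 n t)
  show ?case unfolding Dq.simps Dq'.simps
    by (auto intro!: derivative_eq_intros 3)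
qed auto

lemma Dq_cont: "continuous_on S (Dq n)" "continuous_on S (Dq' n)"
proof -
  have "(continuous_on S (Dq n) \<and> continuous_on S (Dq' n)) \<and>
        (continuous_on S (Dq (Suc n)) \<and> continuous_on S (Dq' (Suc n)))"
    by (induction n) (auto intro!: continuous_intros)
  then show "continuous_on S (Dq n)" "continuous_on S (Dq' n)" by auto
qed

lemma Dq_0: "Dq n 0 = real n" "Dq' n 0 = 0"
proof -
  have "(Dq n 0 = real n \<and> Dq' n 0 = 0) \<and> (Dq (Suc n) 0 = real (Suc n) \<and> Dq' (Suc n) 0 = 0)"
    by (induction n) auto
  then show "Dq n 0 = real n" "Dq' n 0 = 0" by auto
qed

lemma Dq_even: "Dq n (-t) = Dq n t" "Dq' n (-t) = - Dq' n t"
proof -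
  have "(Dq n (-t) = Dq n t \<and> Dq' n (-t) = - Dq' n t) \<and>
    (Dq (Suc n) (-t) = Dq (Suc n) t \<and> Dq' (Suc n) (-t) = - Dq' (Suc n) t)"
    by (induction n) auto
  then show "Dq n (-t) = Dq n t" "Dq' n (-t) = - Dq' n t" by auto
qed

lemma abs_sin_mult_le: "\<bar>sin (real n * t)\<bar> \<le> real n * \<bar>sin t\<bar>"
proof (induction n)
  case (Suc n)
  have "sin (real (Suc n) * t) = sin (real n * t) * cos t + cos (real n * t) * sin t"
    by (simp add: distrib_right sin_add)
  also have "\<bar>\<dots>\<bar> \<le> \<bar>sin (real n * t)\<bar> * \<bar>cos t\<bar> + \<bar>cos (real n * t)\<bar> * \<bar>sin t\<bar>"
    by (metis abs_mult abs_triangle_ineq)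
  also have "\<dots> \<le> \<bar>sin (real n * t)\<bar> + \<bar>sin t\<bar>"
    by (intro add_mono mult_left_le mult_left_le_one_le) auto
  finally show ?case using Suc by (simp add: algebra_simps)
qed simp

lemma f0_even: "f0 q (-x) = f0 q x"
proof -
  have "(-x \<in> \<int>) = (x \<in> \<int>)" by (metis Ints_minus minus_minus)
  then show ?thesis by (simp add: f0_def)
qed

definition fd :: "nat \<Rightarrow> real \<Rightarrow> real" where
  "fd q x = pi * Dq' q (pi * x) / Dq q (pi * x)"

lemma Dq_pos:
  assumes q: "q \<ge> 1" and x: "-1/real q < x" "x < 1/real q"
  shows "Dq q (pi * x) > 0"
proof -
  have main: "Dq q (pi * y) > 0" if "0 < y" "y < 1/real q" for y
  proof -
    have qy: "real q * y < 1" using that q by (simp add: field_simps)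
    have "1/real q \<le> 1" using q by simp
    then have y1: "y < 1" using that by linarith
    have s1: "sin (pi * y) > 0" using that y1 by (intro sin_gt_zero) auto
    have "sin (real q * (pi * y)) > 0"
      using that qy q by (intro sin_gt_zero) (auto simp: algebra_simps)
    then show ?thesis using Dq_sin[of q "pi * y"] s1
      by (metis zero_less_mult_pos)
  qed
  consider "x = 0" | "x > 0" | "x < 0" by linarith
  then show ?thesis
  proof cases
    case 1 then show ?thesis using q by (simp add: Dq_0)
  next
    case 2 then show ?thesis using main x by auto
  next
    case 3 then show ?thesis using main[of "-x"] x Dq_even(1)[of q "pi * x"] by auto
  qed
qed

lemma f0_eq_ln:
  assumes q: "q \<ge> 1" and x: "-1/real q < x" "x < 1/real q"
  shows "f0 q x = ln (Dq q (pi * x))"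
proof (cases "x = 0")
  case True then show ?thesis by (simp add: f0_def Dq_0)
next
  case False
  have q1: "1/real q \<le> 1" using q by simp
  have nZ: "x \<notin> \<int>"
  proof
    assume "x \<in> \<int>"
    then obtain k where k: "x = of_int k" by (auto elim: Ints_cases)
    then show False using False x q1 by auto
  qed
  have sx: "sin (pi * x) \<noteq> 0"
  proof
    assume "sin (pi * x) = 0"
    then obtain i :: int where "pi * x = of_int i * pi" by (auto simp: sin_zero_iff_int2)
    then have "x = of_int i" by simp
    then show False using nZ by simp
  qed
  have "sin (pi * real q * x) / sin (pi * x) = Dq q (pi * x)"
    using Dq_sin[of q "pi * x"] sx by (simp add: field_simps)
  then show ?thesis using nZ Dq_pos[OF q x] by (simp add: f0_def)
qed

lemma f0_deriv:
  assumes q: "q \<ge> 1" and x: "-1/real q < x" "x < 1/real q"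
  shows "(f0 q has_real_derivative fd q x) (at x)"
proof -
  have d: "((\<lambda>x. ln (Dq q (pi * x))) has_real_derivative fd q x) (at x)"
    using Dq_pos[OF q x] unfolding fd_def
    by (auto intro!: derivative_eq_intros DERIV_chain2[OF Dq_deriv] simp: field_simps)
  show ?thesis
    by (rule has_field_derivative_transform_within_open[OF d, of "{-1/real q<..<1/real q}"])
       (use x f0_eq_ln[OF q] in auto)
qed

lemma fd_cont:
  assumes q: "q \<ge> 1"
  shows "continuous_on {-1/real q<..<1/real q} (fd q)"
proof -
  have "continuous_on {-1/real q<..<1/real q} (\<lambda>x. pi * Dq' q (pi * x) / Dq q (pi * x))"
    using Dq_pos[OF q]
    by (intro continuous_intros continuous_on_compose2[OF Dq_cont(1)] continuous_on_compose2[OF Dq_cont(2)])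
       (auto intro!: continuous_intros simp: less_imp_neq[symmetric])
  then show ?thesis unfolding fd_def .
qed

lemma fd_odd: "fd q (-x) = - fd q x"
  unfolding fd_def using Dq_even[of q "pi * x"] by simp

lemma fd_0: "fd q 0 = 0"
  unfolding fd_def by (simp add: Dq_0)

definition f2 :: "nat \<Rightarrow> real \<Rightarrow> real" where
  "f2 q x = pi * real q * cos (pi * real q * x) / sin (pi * real q * x) - pi * cos (pi * x) / sin (pi * x)"

lemma sin_pos_small:
  assumes q: "q \<ge> 1" and x: "0 < x" "x < 1/real q"
  shows "sin (pi * x) > 0" "sin (pi * real q * x) > 0"
proof -
  have qy: "real q * x < 1" using x q by (simp add: field_simps)
  have "1/real q \<le> 1" using q by simp
  then have y1: "x < 1" using x by linarith
  show "sin (pi * x) > 0" using x y1 by (intro sin_gt_zero) auto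
  show "sin (pi * real q * x) > 0"
    using x qy q by (intro sin_gt_zero) (auto simp: algebra_simps)
qed

lemma fd_eq_f2:
  assumes q: "q \<ge> 1" and x: "0 < x" "x < 1/real q"
  shows "fd q x = f2 q x"
proof -
  have d: "((\<lambda>x. ln (sin (pi * real q * x)) - ln (sin (pi * x))) has_real_derivative f2 q x) (at x)"
    using sin_pos_small[OF q x] unfolding f2_def
    by (auto intro!: derivative_eq_intros simp: field_simps)
  have eq: "f0 q y = ln (sin (pi * real q * y)) - ln (sin (pi * y))" if "y \<in> {0<..<1/real q}" for y
  proof -
    have y: "-1/real q < y" "y < 1/real q" using that q by (auto simp: less_le_trans[of _ 0])
    have "f0 q y = ln (Dq q (pi * y))" using f0_eq_ln[OF q y] .
    also have "Dq q (pi * y) = sin (pi * real q * y) / sin (pi * y)"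
      using Dq_sin[of q "pi * y"] sin_pos_small(1)[OF q, of y] that by (simp add: field_simps)
    finally show ?thesis using sin_pos_small[OF q, of y] that by (simp add: ln_div)
  qed
  have d2: "(f0 q has_real_derivative f2 q x) (at x)"
    by (rule has_field_derivative_transform_within_open[OF d, of "{0<..<1/real q}"]) (use x eq in auto)
  have x': "-1/real q < x" using x q by (auto simp: less_le_trans[of _ 0])
  show ?thesis using DERIV_unique[OF f0_deriv[OF q x' x(2)] d2] .
qed

lemma f2_deriv:
  assumes q: "q \<ge> 1" and x: "0 < x" "x < 1/real q"
  shows "(f2 q has_real_derivative pi^2 * (1 / sin (pi * x)^2 - real q^2 / sin (pi * real q * x)^2)) (at x)"
  using sin_pos_small[OF q x] unfolding f2_def
  apply (auto intro!: derivative_eq_intros simp: field_simps power2_eq_square)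
  using sin_cos_squared_add[of "pi*x"] sin_cos_squared_add[of "pi*(x*real q)"]
  apply (simp add: power2_eq_square)
  apply algebra
  done

lemma f2_deriv_nonpos:
  assumes q: "q \<ge> 1" and x: "0 < x" "x < 1/real q"
  shows "pi^2 * (1 / sin (pi * x)^2 - real q^2 / sin (pi * real q * x)^2) \<le> 0"
proof -
  have a: "sin (pi * x) > 0" "sin (pi * real q * x) > 0" using sin_pos_small[OF q x] by auto
  have "sin (real q * (pi * x)) \<le> real q * sin (pi * x)"
    using abs_sin_mult_le[of q "pi * x"] a by (simp add: algebra_simps)
  then have b: "sin (pi * real q * x) \<le> real q * sin (pi * x)" by (simp add: algebra_simps)
  have "sin (pi * real q * x)^2 \<le> (real q * sin (pi * x))^2"
    using b a by (intro power_mono) auto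
  then have "1 / sin (pi * x)^2 \<le> real q^2 / sin (pi * real q * x)^2"
    using a by (simp add: field_simps power_mult_distrib)
  then show ?thesis by (simp add: mult_nonneg_nonpos)
qed

lemma fd_mono_pos:
  assumes q: "q \<ge> 1" and x: "0 \<le> x1" "x1 \<le> x2" "x2 < 1/real q"
  shows "fd q x2 \<le> fd q x1"
proof (rule DERIV_nonpos_imp_decreasing_open[OF x(2)])
  fix x assume xx: "x1 < x" "x < x2"
  then have x0: "0 < x" "x < 1/real q" using x by auto
  have d: "(fd q has_real_derivative pi^2 * (1 / sin (pi * x)^2 - real q^2 / sin (pi * real q * x)^2)) (at x)"
    by (rule has_field_derivative_transform_within_open[OF f2_deriv[OF q x0], of "{0<..<1/real q}"])
       (use x0 fd_eq_f2[OF q] in auto)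
  then show "\<exists>y. (fd q has_real_derivative y) (at x) \<and> y \<le> 0"
    using f2_deriv_nonpos[OF q x0] by blast
next
  have "{x1..x2} \<subseteq> {-1/real q<..<1/real q}" using x q
    by (auto simp: less_le_trans[of _ 0])
  then show "continuous_on {x1..x2} (fd q)" using fd_cont[OF q] continuous_on_subset by blast
qed

lemma fd_mono:
  assumes q: "q \<ge> 1" and x: "-1/real q < x1" "x1 \<le> x2" "x2 < 1/real q"
  shows "fd q x2 \<le> fd q x1"
proof -
  consider "0 \<le> x1" | "x2 \<le> 0" | "x1 < 0" "0 < x2" by linarith
  then show ?thesis
  proof cases
    case 1 then show ?thesis using fd_mono_pos[OF q] x by auto
  next
    case 2
    have "fd q (-x1) \<le> fd q (-x2)" using fd_mono_pos[OF q, of "-x2" "-x1"] x 2 by auto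
    then show ?thesis by (simp add: fd_odd)
  next
    case 3
    have "fd q (-x1) \<le> fd q 0" using fd_mono_pos[OF q, of 0 "-x1"] x 3 by auto
    moreover have "fd q x2 \<le> fd q 0" using fd_mono_pos[OF q, of 0 x2] x 3 by auto
    ultimately show ?thesis by (simp add: fd_odd fd_0)
  qed
qed



lemma sum_list_map_concat:
  "sum_list (map f (concat xss)) = sum_list (map (\<lambda>xs. sum_list (map f xs)) xss)"
  by (induction xss) auto

lemma sum_list_nz: "sum_list (map f xs) \<noteq> (0::real) \<Longrightarrow> \<exists>p\<in>set xs. f p \<noteq> 0"
  by (induction xs) auto

definition sig :: "nat \<Rightarrow> real \<Rightarrow> real \<Rightarrow> real" where
  "sig q lam z = lam + frac (z - real q * lam) / real q"

definition pb :: "nat \<Rightarrow> real \<Rightarrow> real \<Rightarrow> real \<Rightarrow> (real \<times> real) list" where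
  "pb q lam x y = (let s = frac (x - real q * lam) in
     if s + (y - x) \<le> 1 then [(lam + s / real q, lam + (s + (y - x)) / real q)]
     else [(lam + s / real q, lam + 1 / real q), (lam, lam + (s + (y - x) - 1) / real q)])"

fun leaves :: "nat \<Rightarrow> real \<Rightarrow> nat \<Rightarrow> real \<Rightarrow> real \<Rightarrow> (real \<times> real) list" where
  "leaves q lam 0 x y = [(x, y)]"
| "leaves q lam (Suc n) x y = concat (map (\<lambda>(u, v). leaves q lam n u v) (pb q lam x y))"

definition cnt :: "(real \<times> real) list \<Rightarrow> real \<Rightarrow> real" where
  "cnt P w = sum_list (map (\<lambda>(u, v). indicator {u<..<v} w) P)"

lemma cnt_nonneg: "cnt P w \<ge> 0"
  unfolding cnt_def by (induction P) (auto simp: indicator_def)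

lemma cnt_pos:
  assumes "cnt P w \<noteq> 0"
  shows "\<exists>u v. (u, v) \<in> set P \<and> u < w \<and> w < v"
proof -
  obtain p where "p \<in> set P" "(case p of (u, v) \<Rightarrow> indicator {u<..<v} w) \<noteq> (0::real)"
    using sum_list_nz assms unfolding cnt_def by blast
  moreover obtain u v where "p = (u, v)" by (cases p)
  ultimately show ?thesis by (auto simp: indicator_def split: if_splits)
qed

lemma cnt_concat: "cnt (concat (map F P)) w = sum_list (map (\<lambda>p. cnt (F p) w) P)"
  unfolding cnt_def sum_list_map_concat map_map o_def ..

lemma cnt_append: "cnt (P @ Q) w = cnt P w + cnt Q w"
  unfolding cnt_def by simp

locale dyn =
  fixes q :: nat and lam :: real and \<psi> g :: "real \<Rightarrow> real" and \<beta> :: real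
  assumes q2: "q \<ge> 2"
    and per: "\<And>x. \<psi> (x + 1) = \<psi> x"
    and eqn: "\<And>x. lam \<le> x \<Longrightarrow> x \<le> lam + 1 / real q \<Longrightarrow> g x + \<psi> x - \<psi> (frac (real q * x)) = \<beta>"
begin

lemma qpos: "real q > 0" "real q \<ge> 2" "1 / real q \<le> 1/2" using q2 by auto

lemma per_int: "\<psi> (x + of_int k) = \<psi> x"
proof (induction k arbitrary: x rule: int_induct[where k=0])
  case base then show ?case by simp
next
  case (step1 i) then show ?case using per[of "x + of_int i"] by (simp add: add.assoc)
next
  case (step2 i) then show ?case using per[of "x + of_int (i - 1)"] by (simp add: add.assoc)
qed

lemma per_Ints: "d \<in> \<int> \<Longrightarrow> \<psi> (x + d) = \<psi> x"
  by (auto elim!: Ints_cases simp: per_int)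

definition Xi where "Xi x = \<psi> x + g x"

lemma key:
  assumes t: "0 \<le> t" "t \<le> 1" and w: "w - real q * lam - t \<in> \<int>"
  shows "\<psi> w = Xi (lam + t / real q) - \<beta>"
proof -
  let ?x = "lam + t / real q"
  have "?x \<le> lam + 1 / real q" using t qpos by (simp add: divide_right_mono)
  then have e: "g ?x + \<psi> ?x - \<psi> (frac (real q * ?x)) = \<beta>" using t qpos by (intro eqn) auto
  have qx: "real q * ?x = real q * lam + t" using qpos by (simp add: field_simps)
  have "\<psi> (frac (real q * ?x)) = \<psi> (real q * ?x)"
    using per_Ints[of "- of_int (floor (real q * ?x))" "real q * ?x"] by (simp add: frac_def)
  also have "\<dots> = \<psi> w"
    using per_Ints[OF w, of "real q * lam + t"] qx by simp
  finally show ?thesis using e unfolding Xi_def by simp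
qed

lemma Xi_ends: "Xi lam = Xi (lam + 1 / real q)"
  using key[of 0 "real q * lam"] key[of 1 "real q * lam"] by simp

lemma one_step:
  assumes "x \<le> y" "y \<le> x + 1"
  shows "\<psi> y - \<psi> x = sum_list (map (\<lambda>(u, v). Xi v - Xi u) (pb q lam x y))"
proof -
  define s where "s = frac (x - real q * lam)"
  have s: "0 \<le> s" "s < 1" using frac_lt_1 by (auto simp: s_def)
  have sx: "x - real q * lam - s \<in> \<int>" by (simp add: s_def frac_def)
  have px: "\<psi> x = Xi (lam + s / real q) - \<beta>" using key[OF s(1) _ sx] s by simp
  show ?thesis
  proof (cases "s + (y - x) \<le> 1")
    case True
    have "y - real q * lam - (s + (y - x)) \<in> \<int>" using sx by (simp add: algebra_simps)
    then have "\<psi> y = Xi (lam + (s + (y - x)) / real q) - \<beta>" using key True s assms by simp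
    then show ?thesis using px True by (simp add: pb_def Let_def s_def[symmetric])
  next
    case False
    have "y - real q * lam - (s + (y - x) - 1) = (x - real q * lam - s) + 1" by simp
    then have "y - real q * lam - (s + (y - x) - 1) \<in> \<int>" using sx by (metis Ints_1 Ints_add)
    then have "\<psi> y = Xi (lam + (s + (y - x) - 1) / real q) - \<beta>" using key False s assms by simp
    then show ?thesis using px False Xi_ends by (simp add: pb_def Let_def s_def[symmetric])
  qed
qed

lemma pb_sub:
  assumes "x \<le> y" "y \<le> x + 1" "(u, v) \<in> set (pb q lam x y)"
  shows "lam \<le> u \<and> u \<le> v \<and> v \<le> lam + 1 / real q"
proof -
  define s where "s = frac (x - real q * lam)"
  have s: "0 \<le> s" "s < 1" using frac_lt_1 by (auto simp: s_def)
  show ?thesis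
  proof (cases "s + (y - x) \<le> 1")
    case True
    then show ?thesis using assms s qpos by (auto simp: pb_def Let_def s_def[symmetric] divide_right_mono)
  next
    case False
    then show ?thesis using assms s qpos by (auto simp: pb_def Let_def s_def[symmetric] divide_right_mono)
  qed
qed

lemma pb_len:
  assumes "x \<le> y" "y \<le> x + 1"
  shows "sum_list (map (\<lambda>(u, v). v - u) (pb q lam x y)) = (y - x) / real q"
  using qpos by (auto simp: pb_def Let_def field_simps)

lemma sig_range: "lam \<le> sig q lam z" "sig q lam z < lam + 1 / real q"
  using qpos frac_lt_1[of "z - real q * lam"] by (auto simp: sig_def divide_strict_right_mono)

lemma sig_inj: "sig q lam a = sig q lam b \<Longrightarrow> a - b \<in> \<int>"
proof -
  assume "sig q lam a = sig q lam b"
  then have "frac (a - real q * lam) = frac (b - real q * lam)" using qpos by (simp add: sig_def)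
  then obtain n where "a - real q * lam = b - real q * lam + of_int n" by (rule frac_eqE)
  then have "a - b = of_int n" by simp
  then show ?thesis by simp
qed

lemma Ints_small: "d \<in> \<int> \<Longrightarrow> \<bar>d\<bar> < 1 \<Longrightarrow> d = (0::real)"
proof -
  assume "d \<in> \<int>" "\<bar>d\<bar> < 1"
  then obtain z where z: "d = of_int z" "\<bar>of_int z\<bar> < (1::real)" by (auto elim!: Ints_cases)
  then have "\<bar>z\<bar> < 1" by (metis of_int_abs of_int_less_1_iff)
  then show ?thesis using z by simp
qed

lemma sig_pow_inj: "(sig q lam ^^ n) a = (sig q lam ^^ n) b \<Longrightarrow> a - b \<in> \<int>"
proof (induction n arbitrary: a b)
  case 0 then show ?case by simp
next
  case (Suc n)
  have "(sig q lam ^^ n) (sig q lam a) = (sig q lam ^^ n) (sig q lam b)"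
    using Suc.prems by (simp add: funpow_Suc_right del: funpow.simps)
  then have "sig q lam a - sig q lam b \<in> \<int>" by (rule Suc.IH)
  moreover have "\<bar>sig q lam a - sig q lam b\<bar> < 1"
    using sig_range[of a] sig_range[of b] qpos(3) by (simp add: abs_less_iff)
  ultimately have "sig q lam a = sig q lam b" using Ints_small by fastforce
  then show ?case by (rule sig_inj)
qed

lemma pb_img:
  assumes "x \<le> y" "y \<le> x + 1" "(u, v) \<in> set (pb q lam x y)" "u < w" "w < v"
  shows "\<exists>z. x < z \<and> z < y \<and> sig q lam z = w"
proof -
  define s where "s = frac (x - real q * lam)"
  have s: "0 \<le> s" "s < 1" using frac_lt_1 by (auto simp: s_def)
  define tau where "tau = (w - lam) * real q"
  have w: "w = lam + tau / real q" using qpos by (simp add: tau_def)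
  have fl: "x - real q * lam = of_int (floor (x - real q * lam)) + s" by (simp add: s_def frac_def)
  show ?thesis
  proof (cases "s + (y - x) \<le> 1")
    case True
    then have uv: "u = lam + s / real q" "v = lam + (s + (y - x)) / real q"
      using assms(3) by (auto simp: pb_def Let_def s_def[symmetric])
    have t: "s < tau" "tau < s + (y - x)" using assms(4,5) qpos unfolding uv tau_def
      by (auto simp: field_simps)
    define z where "z = x + (tau - s)"
    have "z - real q * lam = of_int (floor (x - real q * lam)) + tau" using fl by (simp add: z_def)
    then have "frac (z - real q * lam) = tau" using t s True by (simp add: frac_eq)
    then show ?thesis using t True by (intro exI[of _ z]) (auto simp: z_def sig_def w)
  next
    case False
    then have uv: "(u = lam + s / real q \<and> v = lam + 1 / real q) \<or> (u = lam \<and> v = lam + (s + (y - x) - 1) / real q)"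
      using assms(3) by (auto simp: pb_def Let_def s_def[symmetric])
    then show ?thesis
    proof
      assume uv: "u = lam + s / real q \<and> v = lam + 1 / real q"
      have t: "s < tau" "tau < 1" using assms(4,5) qpos uv unfolding tau_def
        by (auto simp: field_simps)
      define z where "z = x + (tau - s)"
      have "z - real q * lam = of_int (floor (x - real q * lam)) + tau" using fl by (simp add: z_def)
      then have "frac (z - real q * lam) = tau" using t s by (simp add: frac_eq)
      then show ?thesis using t False by (intro exI[of _ z]) (auto simp: z_def sig_def w)
    next
      assume uv: "u = lam \<and> v = lam + (s + (y - x) - 1) / real q"
      have t: "0 < tau" "tau < s + (y - x) - 1" using assms(4,5) qpos uv unfolding tau_def
        by (auto simp: field_simps)
      define z where "z = x + (1 - s) + tau"
      have e: "z - real q * lam = tau + of_int (floor (x - real q * lam) + 1)" using fl by (simp add: z_def)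
      have "tau < 1" using t s assms by linarith
      then have "frac (z - real q * lam) = tau" unfolding e using t by (simp only: frac_add_of_int_right frac_eq) simp
      then show ?thesis using t False s by (intro exI[of _ z]) (auto simp: z_def sig_def w)
    qed
  qed
qed

lemma pb_shape:
  assumes "x \<le> y" "y \<le> x + 1"
  shows "(\<exists>a b. pb q lam x y = [(a, b)]) \<or> (\<exists>a1 b1 a2 b2. pb q lam x y = [(a1, b1), (a2, b2)] \<and> b2 \<le> a1)"
proof -
  define s where "s = frac (x - real q * lam)"
  show ?thesis
  proof (cases "s + (y - x) \<le> 1")
    case True then show ?thesis by (simp add: pb_def Let_def s_def[symmetric])
  next
    case False
    have "lam + (s + (y - x) - 1) / real q \<le> lam + s / real q"
      using assms qpos by (simp add: divide_right_mono)
    then show ?thesis using False by (simp add: pb_def Let_def s_def[symmetric])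
  qed
qed

lemma sum_list_div: "sum_list (map (\<lambda>p. f p / (c::real)) xs) = sum_list (map f xs) / c"
  by (induction xs) (auto simp: add_divide_distrib)

lemma lv_sub_Suc:
  assumes "x \<le> y" "y \<le> x + 1" "(u, v) \<in> set (leaves q lam (Suc n) x y)"
  shows "lam \<le> u \<and> u \<le> v \<and> v \<le> lam + 1 / real q"
  using assms
proof (induction n arbitrary: x y)
  case 0
  have "(u, v) \<in> set (pb q lam x y)" using 0 by simp
  then show ?case using pb_sub[OF "0.prems"(1,2)] by blast
next
  case (Suc n)
  have "(u, v) \<in> set (concat (map (\<lambda>(u, v). leaves q lam (Suc n) u v) (pb q lam x y)))"
    using Suc.prems(3) by (simp only: leaves.simps(2)[of q lam "Suc n"])
  then obtain p where p: "p \<in> set (pb q lam x y)" "(u, v) \<in> set (case p of (u0, v0) \<Rightarrow> leaves q lam (Suc n) u0 v0)"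
    by (auto simp del: leaves.simps)
  obtain u0 v0 where uv0: "(u0, v0) \<in> set (pb q lam x y)" "(u, v) \<in> set (leaves q lam (Suc n) u0 v0)"
    using p by (cases p) (auto simp del: leaves.simps)
  have "lam \<le> u0 \<and> u0 \<le> v0 \<and> v0 \<le> lam + 1 / real q" using pb_sub Suc.prems uv0 by blast
  then have "u0 \<le> v0" "v0 \<le> u0 + 1" using qpos(3) by auto
  then show ?case using Suc.IH uv0 by blast
qed

lemma lv_sub:
  assumes "x \<le> y" "y \<le> x + 1" "(u, v) \<in> set (leaves q lam n x y)"
  shows "u \<le> v \<and> v \<le> u + 1"
proof (cases n)
  case 0 then show ?thesis using assms by auto
next
  case (Suc m)
  then have "lam \<le> u \<and> u \<le> v \<and> v \<le> lam + 1 / real q" using lv_sub_Suc[OF assms(1,2)] assms(3) by blast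
  then show ?thesis using qpos(3) by auto
qed

lemma lv_len:
  assumes "x \<le> y" "y \<le> x + 1"
  shows "sum_list (map (\<lambda>(u, v). v - u) (leaves q lam n x y)) = (y - x) / real q ^ n"
  using assms
proof (induction n arbitrary: x y)
  case 0 then show ?case by simp
next
  case (Suc n)
  have "sum_list (map (\<lambda>(u, v). v - u) (leaves q lam (Suc n) x y))
      = sum_list (map (\<lambda>(u, v). sum_list (map (\<lambda>(u, v). v - u) (leaves q lam n u v))) (pb q lam x y))"
    unfolding leaves.simps(2) sum_list_map_concat map_map
    by (intro arg_cong[where f=sum_list] map_cong refl) (auto simp del: leaves.simps)
  also have "\<dots> = sum_list (map (\<lambda>p. (case p of (u, v) \<Rightarrow> v - u) / real q ^ n) (pb q lam x y))"
  proof (intro arg_cong[where f=sum_list] map_cong refl)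
    fix p assume p: "p \<in> set (pb q lam x y)"
    obtain u v where [simp]: "p = (u, v)" by fastforce
    have "lam \<le> u \<and> u \<le> v \<and> v \<le> lam + 1 / real q" using pb_sub[OF Suc.prems, of u v] p by simp
    then have "u \<le> v" "v \<le> u + 1" using qpos(3) by auto
    then show "(case p of (u, v) \<Rightarrow> sum_list (map (\<lambda>(u, v). v - u) (leaves q lam n u v))) =
          (case p of (u, v) \<Rightarrow> v - u) / real q ^ n" using Suc.IH by simp
  qed
  also have "\<dots> = (y - x) / real q ^ Suc n"
    by (simp only: sum_list_div pb_len[OF Suc.prems]) (simp add: field_simps)
  finally show ?case .
qed

lemma concat_map_concat: "concat (map F (concat (map G P))) = concat (map (\<lambda>p. concat (map F (G p))) P)"
  by (induction P) auto

lemma lv_bottom: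
  "leaves q lam (Suc n) x y = concat (map (\<lambda>(u, v). pb q lam u v) (leaves q lam n x y))"
proof (induction n arbitrary: x y)
  case 0
  have "concat (map (\<lambda>(u, v). [(u, v)]) xs) = xs" for xs :: "(real \<times> real) list"
    by (induction xs) auto
  moreover have "leaves q lam 0 = (\<lambda>x y. [(x, y)])" by (auto simp: fun_eq_iff)
  ultimately show ?case by simp
next
  case (Suc n)
  have "leaves q lam (Suc (Suc n)) x y =
      concat (map (\<lambda>(u, v). concat (map (\<lambda>(u, v). pb q lam u v) (leaves q lam n u v))) (pb q lam x y))"
    by (simp only: leaves.simps(2)[of q lam "Suc n"])
       (intro arg_cong[where f=concat] map_cong refl, auto simp: Suc.IH simp del: leaves.simps)
  also have "\<dots> = concat (map (\<lambda>(u, v). pb q lam u v) (concat (map (\<lambda>(u, v). leaves q lam n u v) (pb q lam x y))))"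
    by (simp only: concat_map_concat) (intro arg_cong[where f=concat] map_cong refl, auto split: prod.split simp del: leaves.simps)
  also have "\<dots> = concat (map (\<lambda>(u, v). pb q lam u v) (leaves q lam (Suc n) x y))"
    by (simp only: leaves.simps(2)[of q lam n])
  finally show ?case .
qed

lemma lv_mem_Suc:
  assumes "(u, v) \<in> set (leaves q lam (Suc n) x y)"
  obtains a b where "(a, b) \<in> set (pb q lam x y)" "(u, v) \<in> set (leaves q lam n a b)"
proof -
  have "(u, v) \<in> set (concat (map (\<lambda>(u, v). leaves q lam n u v) (pb q lam x y)))"
    using assms by (simp only: leaves.simps(2)[of q lam n])
  then obtain p where p: "p \<in> set (pb q lam x y)" "(u, v) \<in> set (case p of (u0, v0) \<Rightarrow> leaves q lam n u0 v0)"
    by (auto simp del: leaves.simps)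
  then show ?thesis using that by (cases p) (auto simp del: leaves.simps)
qed

lemma pb_ok:
  assumes "x \<le> y" "y \<le> x + 1" "(a, b) \<in> set (pb q lam x y)"
  shows "a \<le> b" "b \<le> a + 1" "lam \<le> a" "b \<le> lam + 1 / real q"
  using pb_sub[OF assms] qpos(3) by auto

lemma lv_img:
  assumes "x \<le> y" "y \<le> x + 1" "(u, v) \<in> set (leaves q lam n x y)" "u < w" "w < v"
  shows "\<exists>z. x < z \<and> z < y \<and> (sig q lam ^^ n) z = w"
  using assms
proof (induction n arbitrary: x y)
  case 0 then show ?case by auto
next
  case (Suc n)
  obtain a b where ab: "(a, b) \<in> set (pb q lam x y)" "(u, v) \<in> set (leaves q lam n a b)"
    using lv_mem_Suc[OF Suc.prems(3)] by blast
  obtain z' where z': "a < z'" "z' < b" "(sig q lam ^^ n) z' = w"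
    using Suc.IH[OF pb_ok(1,2)[OF Suc.prems(1,2) ab(1)] ab(2) Suc.prems(4,5)] by blast
  obtain z where z: "x < z" "z < y" "sig q lam z = z'"
    using pb_img[OF Suc.prems(1,2) ab(1) z'(1,2)] by blast
  have "(sig q lam ^^ Suc n) z = w" using z z' by (simp add: funpow_Suc_right del: funpow.simps)
  then show ?case using z by blast
qed

lemma lv_cnt:
  assumes "x \<le> y" "y \<le> x + 1"
  shows "cnt (leaves q lam n x y) w \<le> 1"
  using assms
proof (induction n arbitrary: x y)
  case 0 then show ?case by (simp add: cnt_def indicator_def)
next
  case (Suc n)
  have e: "cnt (leaves q lam (Suc n) x y) w = sum_list (map (\<lambda>(a, b). cnt (leaves q lam n a b) w) (pb q lam x y))"
    by (simp only: leaves.simps(2)[of q lam n] cnt_concat case_prod_unfold)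
  have IH: "cnt (leaves q lam n a b) w \<le> 1" if "(a, b) \<in> set (pb q lam x y)" for a b
    using Suc.IH[OF pb_ok(1,2)[OF Suc.prems that]] .
  from pb_shape[OF Suc.prems] show ?case
  proof
    assume "\<exists>a b. pb q lam x y = [(a, b)]"
    then obtain a b where ab: "pb q lam x y = [(a, b)]" by blast
    show ?thesis using e IH[of a b] ab by simp
  next
    assume "\<exists>a1 b1 a2 b2. pb q lam x y = [(a1, b1), (a2, b2)] \<and> b2 \<le> a1"
    then obtain a1 b1 a2 b2 where ab: "pb q lam x y = [(a1, b1), (a2, b2)]" "b2 \<le> a1" by blast
    have in1: "(a1, b1) \<in> set (pb q lam x y)" and in2: "(a2, b2) \<in> set (pb q lam x y)" using ab by auto
    have "cnt (leaves q lam n a1 b1) w = 0 \<or> cnt (leaves q lam n a2 b2) w = 0"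
    proof (rule ccontr)
      assume "\<not> ?thesis"
      then have c: "cnt (leaves q lam n a1 b1) w \<noteq> 0" "cnt (leaves q lam n a2 b2) w \<noteq> 0" by auto
      obtain u1 v1 where 1: "(u1, v1) \<in> set (leaves q lam n a1 b1)" "u1 < w" "w < v1" using cnt_pos[OF c(1)] by blast
      obtain u2 v2 where 2: "(u2, v2) \<in> set (leaves q lam n a2 b2)" "u2 < w" "w < v2" using cnt_pos[OF c(2)] by blast
      obtain z1 where z1: "a1 < z1" "z1 < b1" "(sig q lam ^^ n) z1 = w"
        using lv_img[OF pb_ok(1,2)[OF Suc.prems in1] 1] by blast
      obtain z2 where z2: "a2 < z2" "z2 < b2" "(sig q lam ^^ n) z2 = w"
        using lv_img[OF pb_ok(1,2)[OF Suc.prems in2] 2] by blast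
      have "z1 - z2 \<in> \<int>" using sig_pow_inj[of n z1 z2] z1(3) z2(3) by simp
      moreover have "\<bar>z1 - z2\<bar> < 1" using z1 z2 pb_ok(3,4)[OF Suc.prems in1] pb_ok(3,4)[OF Suc.prems in2] qpos(3)
        by (simp add: abs_less_iff)
      ultimately have "z1 = z2" using Ints_small by fastforce
      then show False using z1 z2 ab(2) by simp
    qed
    then show ?thesis using e IH[OF in1] IH[OF in2] ab by auto
  qed
qed

definition LF :: "(real \<Rightarrow> real) \<Rightarrow> nat \<Rightarrow> real \<Rightarrow> real \<Rightarrow> real" where
  "LF F n x y = sum_list (map (\<lambda>(u, v). F v - F u) (leaves q lam n x y))"

lemma LF_step:
  assumes "x \<le> y" "y \<le> x + 1"
  shows "LF \<psi> N x y = LF g (Suc N) x y + LF \<psi> (Suc N) x y"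
proof -
  have "LF \<psi> N x y = sum_list (map (\<lambda>(u, v). sum_list (map (\<lambda>(u, v). Xi v - Xi u) (pb q lam u v))) (leaves q lam N x y))"
    unfolding LF_def
  proof (intro arg_cong[where f=sum_list] map_cong refl)
    fix p assume p: "p \<in> set (leaves q lam N x y)"
    obtain u v where [simp]: "p = (u, v)" by (cases p)
    have "u \<le> v \<and> v \<le> u + 1" using lv_sub[OF assms, of u v N] p by simp
    then show "(case p of (u, v) \<Rightarrow> \<psi> v - \<psi> u) = (case p of (u, v) \<Rightarrow> sum_list (map (\<lambda>(u, v). Xi v - Xi u) (pb q lam u v)))"
      using one_step by simp
  qed
  also have "\<dots> = sum_list (map (\<lambda>(u, v). Xi v - Xi u) (leaves q lam (Suc N) x y))"
    by (simp only: lv_bottom sum_list_map_concat map_map o_def case_prod_unfold)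
  also have "\<dots> = LF g (Suc N) x y + LF \<psi> (Suc N) x y"
    unfolding LF_def Xi_def by (simp add: case_prod_unfold sum_list_addf[symmetric] algebra_simps)
  finally show ?thesis .
qed

lemma decomp:
  assumes "x \<le> y" "y \<le> x + 1"
  shows "\<psi> y - \<psi> x = (\<Sum>n<N. LF g (Suc n) x y) + LF \<psi> N x y"
proof (induction N)
  case 0 then show ?case by (simp add: LF_def)
next
  case (Suc N) then show ?case using LF_step[OF assms, of N] by simp
qed

lemma sum_list_abs_le: "(\<And>p. p \<in> set P \<Longrightarrow> \<bar>f p\<bar> \<le> h p) \<Longrightarrow> \<bar>sum_list (map f P)\<bar> \<le> sum_list (map h P)"
  for f h :: "'a \<Rightarrow> real"
proof (induction P)
  case (Cons a P)
  have "\<bar>f a + sum_list (map f P)\<bar> \<le> \<bar>f a\<bar> + \<bar>sum_list (map f P)\<bar>" by (rule abs_triangle_ineq)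
  then show ?case using Cons by force
qed simp

lemma sum_list_le_map: "(\<And>p. p \<in> set P \<Longrightarrow> f p \<le> h p) \<Longrightarrow> sum_list (map f P) \<le> sum_list (map h P)"
  for f h :: "'a \<Rightarrow> real"
  by (induction P) (auto intro: add_mono)

lemma LF_lip:
  assumes "x \<le> y" "y \<le> x + 1" and lip: "\<And>a b. \<bar>F a - F b\<bar> \<le> Lp * \<bar>a - b\<bar>"
  shows "\<bar>LF F n x y\<bar> \<le> Lp * ((y - x) / real q ^ n)"
proof -
  have "\<bar>LF F n x y\<bar> \<le> sum_list (map (\<lambda>p. Lp * (case p of (u, v) \<Rightarrow> v - u)) (leaves q lam n x y))"
    unfolding LF_def
  proof (rule sum_list_abs_le)
    fix p assume p: "p \<in> set (leaves q lam n x y)"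
    obtain u v where [simp]: "p = (u, v)" by (cases p)
    have "u \<le> v" using lv_sub[OF assms(1,2), of u v n] p by simp
    then show "\<bar>case p of (u, v) \<Rightarrow> F v - F u\<bar> \<le> Lp * (case p of (u, v) \<Rightarrow> v - u)"
      using lip[of v u] by simp
  qed
  also have "\<dots> = Lp * ((y - x) / real q ^ n)"
    by (simp only: sum_list_const_mult lv_len[OF assms(1,2)])
  finally show ?thesis .
qed

lemma cross_level:
  assumes x: "lam + 1 / real q \<le> x" "x < y" "y \<le> lam + 1" and mn: "1 \<le> m" "m < n"
    and c: "cnt (leaves q lam n x y) w \<noteq> 0" "cnt (leaves q lam m x y) w \<noteq> 0"
  shows False
proof -
  have "1 / real q > 0" using qpos(1) by simp
  then have xy: "x \<le> y" "y \<le> x + 1" using x by linarith+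
  obtain u1 v1 where 1: "(u1, v1) \<in> set (leaves q lam n x y)" "u1 < w" "w < v1" using cnt_pos[OF c(1)] by blast
  obtain u2 v2 where 2: "(u2, v2) \<in> set (leaves q lam m x y)" "u2 < w" "w < v2" using cnt_pos[OF c(2)] by blast
  obtain z1 where z1: "x < z1" "z1 < y" "(sig q lam ^^ n) z1 = w" using lv_img[OF xy 1] by blast
  obtain z2 where z2: "x < z2" "z2 < y" "(sig q lam ^^ m) z2 = w" using lv_img[OF xy 2] by blast
  obtain k where k: "n - m = Suc k" using mn by (metis Suc_diff_Suc)
  define s where "s = (sig q lam ^^ (n - m)) z1"
  have "(sig q lam ^^ n) z1 = (sig q lam ^^ m) s"
    unfolding s_def using mn by (metis funpow_add o_apply le_add_diff_inverse less_imp_le)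
  then have "s - z2 \<in> \<int>" using z1(3) z2(3) sig_pow_inj[of m s z2] by simp
  moreover have "s = sig q lam ((sig q lam ^^ k) z1)" unfolding s_def k by simp
  then have "lam \<le> s" "s < lam + 1 / real q" using sig_range by auto
  then have "z2 - s > 0" "z2 - s < 1" using z2 x by auto
  moreover have "(z2 - s) \<in> \<int> \<Longrightarrow> 0 < z2 - s \<Longrightarrow> z2 - s < 1 \<Longrightarrow> False"
    using Ints_small[of "z2 - s"] by auto
  ultimately show False by (metis Ints_minus minus_diff_eq)
qed

lemma total_cnt:
  assumes x: "lam + 1 / real q \<le> x" "x < y" "y \<le> lam + 1"
  shows "cnt (concat (map (\<lambda>n. leaves q lam (Suc n) x y) [0..<N])) w \<le> 1 \<and>
    (cnt (concat (map (\<lambda>n. leaves q lam (Suc n) x y) [0..<N])) w \<noteq> 0 \<longrightarrow> (\<exists>n<N. cnt (leaves q lam (Suc n) x y) w \<noteq> 0))"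
proof (induction N)
  case 0 then show ?case by (simp add: cnt_def)
next
  case (Suc N)
  have "1 / real q > 0" using qpos(1) by simp
  then have xy: "x \<le> y" "y \<le> x + 1" using x by linarith+
  let ?C = "cnt (concat (map (\<lambda>n. leaves q lam (Suc n) x y) [0..<N])) w"
  let ?c = "cnt (leaves q lam (Suc N) x y) w"
  have e: "cnt (concat (map (\<lambda>n. leaves q lam (Suc n) x y) [0..<Suc N])) w = ?C + ?c"
    by (simp add: cnt_append del: leaves.simps)
  show ?case
  proof (cases "?c = 0")
    case True
    then have "?C + ?c = ?C" by simp
    then show ?thesis using Suc e less_SucI by (metis (no_types, lifting))
  next
    case False
    have "?C = 0"
    proof (rule ccontr)
      assume "?C \<noteq> 0"
      then obtain n where "n < N" "cnt (leaves q lam (Suc n) x y) w \<noteq> 0" using Suc by blast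
      then show False using cross_level[OF x, of "Suc n" "Suc N" w] False by simp
    qed
    then show ?thesis using e lv_cnt[OF xy, of "Suc N" w] False by auto
  qed
qed

end


lemma ind_integral:
  assumes "\<alpha> \<le> u" "u \<le> v" "v \<le> \<beta>" "continuous_on {\<alpha>..\<beta>} h"
  shows "(\<lambda>t. indicator {u..v} t * h t) integrable_on {\<alpha>..\<beta>}"
    "integral {\<alpha>..\<beta>} (\<lambda>t. indicator {u..v} t * h t) = integral {u..v} (h :: real \<Rightarrow> real)"
    "(\<lambda>t. indicator {u<..<v} t * h t) integrable_on {\<alpha>..\<beta>}"
    "integral {\<alpha>..\<beta>} (\<lambda>t. indicator {u<..<v} t * h t) = integral {u..v} h"
proof -
  have e1: "(\<lambda>t. indicator {u..v} t * h t) = (\<lambda>t. if t \<in> {u..v} then h t else 0)"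
    by (auto simp: fun_eq_iff indicator_def)
  have e2: "(\<lambda>t. indicator {u<..<v} t * h t) = (\<lambda>t. if t \<in> {u<..<v} then h t else 0)"
    by (auto simp: fun_eq_iff indicator_def)
  have i1: "{u..v} \<inter> {\<alpha>..\<beta>} = {u..v}" "{u<..<v} \<inter> {\<alpha>..\<beta>} = {u<..<v}" using assms by auto
  have hc: "h integrable_on {u..v}"
    by (rule integrable_continuous_real) (rule continuous_on_subset[OF assms(4)], use assms in auto)
  show "(\<lambda>t. indicator {u..v} t * h t) integrable_on {\<alpha>..\<beta>}"
    unfolding e1 integrable_restrict_Int i1 by (rule hc)
  show "integral {\<alpha>..\<beta>} (\<lambda>t. indicator {u..v} t * h t) = integral {u..v} h"
    unfolding e1 integral_restrict_Int i1 ..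
  show "(\<lambda>t. indicator {u<..<v} t * h t) integrable_on {\<alpha>..\<beta>}"
    unfolding e2 integrable_restrict_Int i1 integrable_on_open_interval_real by (rule hc)
  show "integral {\<alpha>..\<beta>} (\<lambda>t. indicator {u<..<v} t * h t) = integral {u..v} h"
    unfolding e2 integral_restrict_Int i1 integral_open_interval_real ..
qed

lemma list_integral:
  assumes "\<And>u v. (u, v) \<in> set P \<Longrightarrow> \<alpha> \<le> u \<and> u \<le> v \<and> v \<le> \<beta>" "continuous_on {\<alpha>..\<beta>} h"
  shows "((\<lambda>t. cnt P t * h t) integrable_on {\<alpha>..\<beta>}) \<and>
    integral {\<alpha>..\<beta>} (\<lambda>t. cnt P t * h t) = sum_list (map (\<lambda>(u, v). integral {u..v} h) P)"
  using assms(1)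
proof (induction P)
  case Nil then show ?case by (simp add: cnt_def integrable_0)
next
  case (Cons p P)
  obtain u v where p: "p = (u, v)" by (cases p)
  have uv: "\<alpha> \<le> u" "u \<le> v" "v \<le> \<beta>" using Cons.prems[of u v] p by auto
  have IH: "((\<lambda>t. cnt P t * h t) integrable_on {\<alpha>..\<beta>}) \<and>
    integral {\<alpha>..\<beta>} (\<lambda>t. cnt P t * h t) = sum_list (map (\<lambda>(u, v). integral {u..v} h) P)"
    using Cons by auto
  have e: "(\<lambda>t. cnt (p # P) t * h t) = (\<lambda>t. indicator {u<..<v} t * h t + cnt P t * h t)"
    by (auto simp: fun_eq_iff cnt_def p algebra_simps)
  show ?case unfolding e
    using ind_integral(3,4)[OF uv assms(2)] IH integral_add[of "\<lambda>t. indicator {u<..<v} t * h t" "{\<alpha>..\<beta>}" "\<lambda>t. cnt P t * h t"]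
    by (auto simp: p intro: integrable_add)
qed

lemma bathtub_gen:
  fixes X h :: "real \<Rightarrow> real"
  assumes ab: "\<alpha> \<le> \<beta>" and ic: "X integrable_on {\<alpha>..\<beta>}" and ich: "(\<lambda>t. X t * h t) integrable_on {\<alpha>..\<beta>}"
    and b: "\<And>t. t \<in> {\<alpha>..\<beta>} \<Longrightarrow> 0 \<le> X t \<and> X t \<le> 1"
    and S: "integral {\<alpha>..\<beta>} X = S"
    and hc: "continuous_on {\<alpha>..\<beta>} h"
    and hm: "\<And>s t. \<alpha> \<le> s \<Longrightarrow> s \<le> t \<Longrightarrow> t \<le> \<beta> \<Longrightarrow> h t \<le> h s"
  shows "0 \<le> S" "S \<le> \<beta> - \<alpha>"
    "integral {\<alpha>..\<beta>} (\<lambda>t. X t * h t) \<le> integral {\<alpha>..\<alpha>+S} h"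
    "integral {\<beta>-S..\<beta>} h \<le> integral {\<alpha>..\<beta>} (\<lambda>t. X t * h t)"
proof -
  show S0: "0 \<le> S" using S integral_nonneg[OF ic] b by force
  have "integral {\<alpha>..\<beta>} X \<le> integral {\<alpha>..\<beta>} (\<lambda>_. 1::real)"
    by (rule integral_le[OF ic]) (use b in auto)
  then show S1: "S \<le> \<beta> - \<alpha>" using S ab by simp
  have c1: "continuous_on {\<alpha>..\<beta>} (\<lambda>_. 1::real)" by simp
  let ?c = "h (\<alpha> + S)"
  let ?e = "\<lambda>t. indicator {\<alpha>..\<alpha>+S} t :: real"
  have ue: "\<alpha> \<le> \<alpha>" "\<alpha> \<le> \<alpha> + S" "\<alpha> + S \<le> \<beta>" using S0 S1 by auto
  have ie: "?e integrable_on {\<alpha>..\<beta>}" "integral {\<alpha>..\<beta>} ?e = S"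
    using ind_integral(1,2)[OF ue c1] S0 by auto
  have ieh: "(\<lambda>t. ?e t * h t) integrable_on {\<alpha>..\<beta>}" "integral {\<alpha>..\<beta>} (\<lambda>t. ?e t * h t) = integral {\<alpha>..\<alpha>+S} h"
    using ind_integral(1,2)[OF ue hc] by auto
  have "integral {\<alpha>..\<beta>} (\<lambda>t. X t * h t - ?e t * h t) \<le> integral {\<alpha>..\<beta>} (\<lambda>t. ?c * X t - ?c * ?e t)"
  proof (rule integral_le)
    show "(\<lambda>t. X t * h t - ?e t * h t) integrable_on {\<alpha>..\<beta>}" using ich ieh by (intro integrable_diff)
    show "(\<lambda>t. ?c * X t - ?c * ?e t) integrable_on {\<alpha>..\<beta>}" using ic ie by (intro integrable_diff integrable_on_mult_right)
    fix t assume t: "t \<in> {\<alpha>..\<beta>}"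
    show "X t * h t - ?e t * h t \<le> ?c * X t - ?c * ?e t"
    proof (cases "t \<le> \<alpha> + S")
      case True
      then have "h t \<ge> ?c" using hm[of t "\<alpha> + S"] t ue by auto
      moreover have "X t - 1 \<le> 0" using b[OF t] by auto
      ultimately have "(X t - 1) * (h t - ?c) \<le> 0" by (simp add: mult_nonpos_nonneg)
      then show ?thesis using True t by (simp add: indicator_def algebra_simps)
    next
      case False
      then have "h t \<le> ?c" using hm[of "\<alpha> + S" t] t ue by auto
      moreover have "X t \<ge> 0" using b[OF t] by auto
      ultimately have "X t * (h t - ?c) \<le> 0" by (simp add: mult_nonneg_nonpos)
      then show ?thesis using False t by (simp add: indicator_def algebra_simps)
    qed
  qed
  also have "\<dots> = ?c * S - ?c * S"
    using ic ie S by (simp add: integral_diff integrable_on_mult_right)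
  finally show "integral {\<alpha>..\<beta>} (\<lambda>t. X t * h t) \<le> integral {\<alpha>..\<alpha>+S} h"
    using ich ieh by (simp add: integral_diff)
next
  have S0: "0 \<le> S" using S integral_nonneg[OF ic] b by force
  have "integral {\<alpha>..\<beta>} X \<le> integral {\<alpha>..\<beta>} (\<lambda>_. 1::real)"
    by (rule integral_le[OF ic]) (use b in auto)
  then have S1: "S \<le> \<beta> - \<alpha>" using S ab by simp
  have c1: "continuous_on {\<alpha>..\<beta>} (\<lambda>_. 1::real)" by simp
  let ?c = "h (\<beta> - S)"
  let ?e = "\<lambda>t. indicator {\<beta>-S..\<beta>} t :: real"
  have ue: "\<alpha> \<le> \<beta> - S" "\<beta> - S \<le> \<beta>" "\<beta> \<le> \<beta>" using S0 S1 by auto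
  have ie: "?e integrable_on {\<alpha>..\<beta>}" "integral {\<alpha>..\<beta>} ?e = S"
    using ind_integral(1,2)[OF ue c1] S0 by auto
  have ieh: "(\<lambda>t. ?e t * h t) integrable_on {\<alpha>..\<beta>}" "integral {\<alpha>..\<beta>} (\<lambda>t. ?e t * h t) = integral {\<beta>-S..\<beta>} h"
    using ind_integral(1,2)[OF ue hc] by auto
  have "integral {\<alpha>..\<beta>} (\<lambda>t. ?c * X t - ?c * ?e t) \<le> integral {\<alpha>..\<beta>} (\<lambda>t. X t * h t - ?e t * h t)"
  proof (rule integral_le)
    show "(\<lambda>t. X t * h t - ?e t * h t) integrable_on {\<alpha>..\<beta>}" using ich ieh by (intro integrable_diff)
    show "(\<lambda>t. ?c * X t - ?c * ?e t) integrable_on {\<alpha>..\<beta>}" using ic ie by (intro integrable_diff integrable_on_mult_right)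
    fix t assume t: "t \<in> {\<alpha>..\<beta>}"
    show "?c * X t - ?c * ?e t \<le> X t * h t - ?e t * h t"
    proof (cases "\<beta> - S \<le> t")
      case True
      then have "h t \<le> ?c" using hm[of "\<beta> - S" t] t ue by auto
      moreover have "X t - 1 \<le> 0" using b[OF t] by auto
      ultimately have "(X t - 1) * (h t - ?c) \<ge> 0" by (simp add: mult_nonpos_nonpos)
      then show ?thesis using True t by (simp add: indicator_def algebra_simps)
    next
      case False
      then have "h t \<ge> ?c" using hm[of t "\<beta> - S"] t ue by auto
      moreover have "X t \<ge> 0" using b[OF t] by auto
      ultimately have "X t * (h t - ?c) \<ge> 0" by simp
      then show ?thesis using False t by (simp add: indicator_def algebra_simps)
    qed
  qed
  moreover have "integral {\<alpha>..\<beta>} (\<lambda>t. ?c * X t - ?c * ?e t) = ?c * S - ?c * S"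
    using ic ie S by (simp add: integral_diff integrable_on_mult_right)
  ultimately show "integral {\<beta>-S..\<beta>} h \<le> integral {\<alpha>..\<beta>} (\<lambda>t. X t * h t)"
    using ich ieh by (simp add: integral_diff)
qed



lemma list_bathtub:
  fixes h :: "real \<Rightarrow> real"
  assumes P: "\<And>u v. (u, v) \<in> set P \<Longrightarrow> \<alpha> \<le> u \<and> u \<le> v \<and> v \<le> \<beta>" and ab: "\<alpha> \<le> \<beta>"
    and c: "\<And>t. cnt P t \<le> 1"
    and hc: "continuous_on {\<alpha>..\<beta>} h"
    and hm: "\<And>s t. \<alpha> \<le> s \<Longrightarrow> s \<le> t \<Longrightarrow> t \<le> \<beta> \<Longrightarrow> h t \<le> h s"
    and S: "S = sum_list (map (\<lambda>(u, v). v - u) P)"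
  shows "S \<le> \<beta> - \<alpha>" "sum_list (map (\<lambda>(u, v). integral {u..v} h) P) \<le> integral {\<alpha>..\<alpha>+S} h"
    "integral {\<beta>-S..\<beta>} h \<le> sum_list (map (\<lambda>(u, v). integral {u..v} h) P)"
proof -
  have c1: "continuous_on {\<alpha>..\<beta>} (\<lambda>_. 1::real)" by simp
  have L1: "((\<lambda>t. cnt P t * 1) integrable_on {\<alpha>..\<beta>}) \<and>
    integral {\<alpha>..\<beta>} (\<lambda>t. cnt P t * 1) = sum_list (map (\<lambda>(u, v). integral {u..v} (\<lambda>_. 1::real)) P)"
    by (rule list_integral[OF P c1])
  have "sum_list (map (\<lambda>(u, v). integral {u..v} (\<lambda>_. 1::real)) P) = S"
    unfolding S
  proof (intro arg_cong[where f=sum_list] map_cong refl)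
    fix p assume p: "p \<in> set P"
    obtain u v where [simp]: "p = (u, v)" by (cases p)
    have "u \<le> v" using P[of u v] p by simp
    then show "(case p of (u, v) \<Rightarrow> integral {u..v} (\<lambda>_. 1::real)) = (case p of (u, v) \<Rightarrow> v - u)"
      by simp
  qed
  then have L1': "cnt P integrable_on {\<alpha>..\<beta>}" "integral {\<alpha>..\<beta>} (cnt P) = S" using L1 by auto
  have L2: "((\<lambda>t. cnt P t * h t) integrable_on {\<alpha>..\<beta>}) \<and>
    integral {\<alpha>..\<beta>} (\<lambda>t. cnt P t * h t) = sum_list (map (\<lambda>(u, v). integral {u..v} h) P)"
    by (rule list_integral[OF P hc])
  have b: "\<And>t. t \<in> {\<alpha>..\<beta>} \<Longrightarrow> 0 \<le> cnt P t \<and> cnt P t \<le> 1" using c cnt_nonneg by auto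
  note B = bathtub_gen[OF ab L1'(1) conjunct1[OF L2] b L1'(2) hc hm]
  show "S \<le> \<beta> - \<alpha>" by (rule B(2))
  show "sum_list (map (\<lambda>(u, v). integral {u..v} h) P) \<le> integral {\<alpha>..\<alpha>+S} h" using B(3) L2 by simp
  show "integral {\<beta>-S..\<beta>} h \<le> sum_list (map (\<lambda>(u, v). integral {u..v} h) P)" using B(4) L2 by simp
qed

locale dyn2 = dyn +
  fixes g' :: "real \<Rightarrow> real" and Lp :: real
  assumes gder: "\<And>t. lam \<le> t \<Longrightarrow> t \<le> lam + 1 / real q \<Longrightarrow> (g has_real_derivative g' t) (at t)"
    and g'c: "continuous_on {lam..lam + 1 / real q} g'"
    and g'm: "\<And>s t. lam \<le> s \<Longrightarrow> s \<le> t \<Longrightarrow> t \<le> lam + 1 / real q \<Longrightarrow> g' t \<le> g' s"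
    and lip: "\<And>a b. \<bar>\<psi> a - \<psi> b\<bar> \<le> Lp * \<bar>a - b\<bar>"
begin

lemma ftc:
  assumes "lam \<le> u" "u \<le> v" "v \<le> lam + 1 / real q"
  shows "g v - g u = integral {u..v} g'"
proof -
  have "(g' has_integral (g v - g u)) {u..v}"
  proof (rule fundamental_theorem_of_calculus[OF assms(2)])
    fix t assume "t \<in> {u..v}"
    then have "(g has_real_derivative g' t) (at t)" using gder assms by auto
    then show "(g has_vector_derivative g' t) (at t within {u..v})"
      by (simp add: has_real_derivative_iff_has_vector_derivative has_vector_derivative_at_within)
  qed
  then show ?thesis by (simp add: integral_unique)
qed

lemma LFg_int:
  assumes "x \<le> y" "y \<le> x + 1"
  shows "LF g (Suc n) x y = sum_list (map (\<lambda>(u, v). integral {u..v} g') (leaves q lam (Suc n) x y))"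
  unfolding LF_def
proof (intro arg_cong[where f=sum_list] map_cong refl)
  fix p assume p: "p \<in> set (leaves q lam (Suc n) x y)"
  obtain u v where [simp]: "p = (u, v)" by (cases p)
  have "lam \<le> u \<and> u \<le> v \<and> v \<le> lam + 1 / real q" using lv_sub_Suc[OF assms, of u v n] p by simp
  then show "(case p of (u, v) \<Rightarrow> g v - g u) = (case p of (u, v) \<Rightarrow> integral {u..v} g')" using ftc by simp
qed

lemma sum_upt_concat:
  "sum_list (map F (concat (map G [0..<N]))) = (\<Sum>n<N. sum_list (map F (G n)))"
  by (induction N) (auto simp: sum_list_map_concat)

lemma R1_aux:
  fixes N :: nat
  assumes x: "lam + 1 / real q \<le> x" "x < y" "y \<le> lam + 1"
  defines "S \<equiv> (\<Sum>n<N. (y - x) / real q ^ Suc n)"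
  shows "S \<le> 1 / real q"
    "\<psi> y - \<psi> x \<le> g (lam + S) - g lam + Lp * ((y - x) / real q ^ N)"
    "\<psi> y - \<psi> x \<ge> g (lam + 1 / real q) - g (lam + 1 / real q - S) - Lp * ((y - x) / real q ^ N)"
proof -
  have "1 / real q > 0" using qpos(1) by simp
  then have xy: "x \<le> y" "y \<le> x + 1" using x by linarith+
  define P where "P = concat (map (\<lambda>n. leaves q lam (Suc n) x y) [0..<N])"
  have Psub: "lam \<le> u \<and> u \<le> v \<and> v \<le> lam + 1 / real q" if "(u, v) \<in> set P" for u v
  proof -
    have "\<exists>n. (u, v) \<in> set (leaves q lam (Suc n) x y)" using that by (auto simp: P_def simp del: leaves.simps)
    then obtain n where "(u, v) \<in> set (leaves q lam (Suc n) x y)" by blast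
    then show ?thesis using lv_sub_Suc[OF xy] by blast
  qed
  have Pc: "cnt P t \<le> 1" for t using total_cnt[OF x, of N t] by (simp add: P_def)
  have SP: "S = sum_list (map (\<lambda>(u, v). v - u) P)"
    unfolding P_def sum_upt_concat S_def using lv_len[OF xy] by (simp del: leaves.simps)
  have lam1: "lam \<le> lam + 1 / real q" using \<open>1 / real q > 0\<close> by simp
  note B = list_bathtub[OF Psub lam1 Pc g'c g'm SP]
  have sumP: "(\<Sum>n<N. LF g (Suc n) x y) = sum_list (map (\<lambda>(u, v). integral {u..v} g') P)"
    unfolding P_def sum_upt_concat using LFg_int[OF xy] by (simp del: leaves.simps)
  have rem: "\<bar>LF \<psi> N x y\<bar> \<le> Lp * ((y - x) / real q ^ N)" by (rule LF_lip[OF xy lip])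
  have dec: "\<psi> y - \<psi> x = (\<Sum>n<N. LF g (Suc n) x y) + LF \<psi> N x y" by (rule decomp[OF xy])
  show S1: "S \<le> 1 / real q" using B(1) by simp
  have S0: "0 \<le> S" unfolding S_def using x by (auto intro!: sum_nonneg)
  have "integral {lam..lam + S} g' = g (lam + S) - g lam" using ftc[of lam "lam + S"] S0 S1 by simp
  then show "\<psi> y - \<psi> x \<le> g (lam + S) - g lam + Lp * ((y - x) / real q ^ N)"
    using B(2) dec sumP rem by (simp add: abs_le_iff)
  have "integral {lam + 1 / real q - S..lam + 1 / real q} g' = g (lam + 1 / real q) - g (lam + 1 / real q - S)"
    using ftc[of "lam + 1 / real q - S" "lam + 1 / real q"] S0 S1 by simp
  then show "\<psi> y - \<psi> x \<ge> g (lam + 1 / real q) - g (lam + 1 / real q - S) - Lp * ((y - x) / real q ^ N)"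
    using B(3) dec sumP rem by (simp add: abs_le_iff)
qed

lemma LFg_slope:
  assumes xy: "x \<le> y" "y \<le> x + 1"
  shows "LF g (Suc n) x y \<le> g' lam * ((y - x) / real q ^ Suc n)"
    "LF g (Suc n) x y \<ge> g' (lam + 1 / real q) * ((y - x) / real q ^ Suc n)"
proof -
  have a: "integral {u..v} g' \<le> g' lam * (v - u) \<and> g' (lam + 1 / real q) * (v - u) \<le> integral {u..v} g'"
    if "(u, v) \<in> set (leaves q lam (Suc n) x y)" for u v
  proof -
    have uv: "lam \<le> u" "u \<le> v" "v \<le> lam + 1 / real q" using lv_sub_Suc[OF xy that] by auto
    have gi: "g' integrable_on {u..v}"
      by (rule integrable_continuous_real) (rule continuous_on_subset[OF g'c], use uv in auto)
    have "integral {u..v} g' \<le> integral {u..v} (\<lambda>_. g' lam)"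
      by (rule integral_le[OF gi]) (use uv g'm in auto)
    moreover have "integral {u..v} (\<lambda>_. g' (lam + 1 / real q)) \<le> integral {u..v} g'"
      by (rule integral_le[OF _ gi]) (use uv g'm in auto)
    ultimately show ?thesis using uv by (simp add: algebra_simps)
  qed
  have "LF g (Suc n) x y \<le> sum_list (map (\<lambda>p. g' lam * (case p of (u, v) \<Rightarrow> v - u)) (leaves q lam (Suc n) x y))"
    unfolding LFg_int[OF xy] by (rule sum_list_le_map) (use a in \<open>auto simp del: leaves.simps\<close>)
  then show "LF g (Suc n) x y \<le> g' lam * ((y - x) / real q ^ Suc n)"
    by (simp only: sum_list_const_mult lv_len[OF xy])
  have "sum_list (map (\<lambda>p. g' (lam + 1 / real q) * (case p of (u, v) \<Rightarrow> v - u)) (leaves q lam (Suc n) x y)) \<le> LF g (Suc n) x y"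
    unfolding LFg_int[OF xy] by (rule sum_list_le_map) (use a in \<open>auto simp del: leaves.simps\<close>)
  then show "LF g (Suc n) x y \<ge> g' (lam + 1 / real q) * ((y - x) / real q ^ Suc n)"
    by (simp only: sum_list_const_mult lv_len[OF xy])
qed

lemma R2_aux:
  fixes N :: nat
  assumes xy: "x \<le> y" "y \<le> x + 1"
  shows "\<psi> y - \<psi> x \<le> g (lam + (y - x) / real q) - g lam + (\<Sum>n<N. g' lam * ((y - x) / real q ^ Suc (Suc n)))
      + Lp * ((y - x) / real q ^ Suc N)"
    "\<psi> y - \<psi> x \<ge> g (lam + 1 / real q) - g (lam + 1 / real q - (y - x) / real q)
      + (\<Sum>n<N. g' (lam + 1 / real q) * ((y - x) / real q ^ Suc (Suc n))) - Lp * ((y - x) / real q ^ Suc N)"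
proof -
  have dec: "\<psi> y - \<psi> x = LF g 1 x y + (\<Sum>n<N. LF g (Suc (Suc n)) x y) + LF \<psi> (Suc N) x y"
    using decomp[OF xy, of "Suc N"] by (simp only: sum.lessThan_Suc_shift One_nat_def)
  have rem: "\<bar>LF \<psi> (Suc N) x y\<bar> \<le> Lp * ((y - x) / real q ^ Suc N)" by (rule LF_lip[OF xy lip])
  have s1: "(\<Sum>n<N. LF g (Suc (Suc n)) x y) \<le> (\<Sum>n<N. g' lam * ((y - x) / real q ^ Suc (Suc n)))"
    by (rule sum_mono) (rule LFg_slope(1)[OF xy])
  have s2: "(\<Sum>n<N. LF g (Suc (Suc n)) x y) \<ge> (\<Sum>n<N. g' (lam + 1 / real q) * ((y - x) / real q ^ Suc (Suc n)))"
    by (rule sum_mono) (rule LFg_slope(2)[OF xy])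
  define P where "P = leaves q lam 1 x y"
  have Psub: "lam \<le> u \<and> u \<le> v \<and> v \<le> lam + 1 / real q" if "(u, v) \<in> set P" for u v
    using lv_sub_Suc[OF xy, of u v 0] that by (simp add: P_def del: leaves.simps)
  have Pc: "cnt P t \<le> 1" for t using lv_cnt[OF xy] by (simp add: P_def del: leaves.simps)
  have SP: "(y - x) / real q = sum_list (map (\<lambda>(u, v). v - u) P)"
    unfolding P_def using lv_len[OF xy, of 1] by (simp del: leaves.simps)
  have "1 / real q > 0" using qpos(1) by simp
  then have lam1: "lam \<le> lam + 1 / real q" by simp
  note B = list_bathtub[OF Psub lam1 Pc g'c g'm SP]
  have LF1: "LF g 1 x y = sum_list (map (\<lambda>(u, v). integral {u..v} g') P)"
    unfolding P_def using LFg_int[OF xy, of 0] by simp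
  have S0: "0 \<le> (y - x) / real q" using xy qpos by simp
  have "integral {lam..lam + (y - x) / real q} g' = g (lam + (y - x) / real q) - g lam"
    using ftc[of lam "lam + (y - x) / real q"] S0 B(1) by simp
  then show "\<psi> y - \<psi> x \<le> g (lam + (y - x) / real q) - g lam + (\<Sum>n<N. g' lam * ((y - x) / real q ^ Suc (Suc n)))
      + Lp * ((y - x) / real q ^ Suc N)"
    using B(2) dec LF1 rem s1 by (simp add: abs_le_iff)
  have "integral {lam + 1 / real q - (y - x) / real q..lam + 1 / real q} g' = g (lam + 1 / real q) - g (lam + 1 / real q - (y - x) / real q)"
    using ftc[of "lam + 1 / real q - (y - x) / real q" "lam + 1 / real q"] S0 B(1) by simp
  then show "\<psi> y - \<psi> x \<ge> g (lam + 1 / real q) - g (lam + 1 / real q - (y - x) / real q)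
      + (\<Sum>n<N. g' (lam + 1 / real q) * ((y - x) / real q ^ Suc (Suc n))) - Lp * ((y - x) / real q ^ Suc N)"
    using B(3) dec LF1 rem s2 by (simp add: abs_le_iff)
qed

lemma geo1: "(\<lambda>n. d / real q ^ Suc n) sums (d / (real q - 1))"
proof -
  have "norm (1 / real q) < 1" using qpos by simp
  from sums_mult[OF geometric_sums[OF this], of "d / real q"]
  have "(\<lambda>n. d / real q * (1 / real q) ^ n) sums (d / real q * (1 / (1 - 1 / real q)))" .
  moreover have "(\<lambda>n. d / real q * (1 / real q) ^ n) = (\<lambda>n. d / real q ^ Suc n)"
    by (auto simp: fun_eq_iff power_one_over field_simps)
  moreover have "d / real q * (1 / (1 - 1 / real q)) = d / (real q - 1)"
    using qpos by (simp add: field_simps)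
  ultimately show ?thesis by metis
qed

lemma geo2: "(\<lambda>n. c * (d / real q ^ Suc (Suc n))) sums (c * (d / (real q * (real q - 1))))"
proof -
  from sums_mult[OF geo1[of d], of "c / real q"]
  have "(\<lambda>n. c / real q * (d / real q ^ Suc n)) sums (c / real q * (d / (real q - 1)))" .
  moreover have "(\<lambda>n. c / real q * (d / real q ^ Suc n)) = (\<lambda>n. c * (d / real q ^ Suc (Suc n)))"
    by (auto simp: fun_eq_iff field_simps)
  moreover have "c / real q * (d / (real q - 1)) = c * (d / (real q * (real q - 1)))"
    using qpos by (simp add: field_simps)
  ultimately show ?thesis by metis
qed

lemma lim0: "(\<lambda>N. Lp * (d / real q ^ N)) \<longlonglongrightarrow> 0"
proof -
  have "(\<lambda>N. d / real q ^ N) \<longlonglongrightarrow> 0" using qpos by (intro LIMSEQ_divide_realpow_zero) auto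
  from tendsto_mult[OF tendsto_const this, of Lp] show ?thesis by simp
qed

lemma lim0': "(\<lambda>N. Lp * (d / real q ^ Suc N)) \<longlonglongrightarrow> 0"
proof -
  have "(\<lambda>N. Lp * ((d / real q) / real q ^ N)) \<longlonglongrightarrow> 0" by (rule lim0)
  moreover have "(\<lambda>N. Lp * ((d / real q) / real q ^ N)) = (\<lambda>N. Lp * (d / real q ^ Suc N))"
    by (auto simp: fun_eq_iff field_simps)
  ultimately show ?thesis by simp
qed

lemma g_isCont: "lam \<le> t \<Longrightarrow> t \<le> lam + 1 / real q \<Longrightarrow> isCont g t"
  using gder DERIV_isCont by blast

lemma T1:
  assumes x: "lam + 1 / real q \<le> x" "x < y" "y \<le> lam + 1"
  shows "\<psi> y - \<psi> x \<le> g (lam + (y - x) / (real q - 1)) - g lam"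
    "\<psi> y - \<psi> x \<ge> g (lam + 1 / real q) - g (lam + 1 / real q - (y - x) / (real q - 1))"
proof -
  let ?S = "\<lambda>N. (\<Sum>n<N. (y - x) / real q ^ Suc n)"
  let ?l = "(y - x) / (real q - 1)"
  have lim: "?S \<longlonglongrightarrow> ?l" using geo1[of "y - x"] by (simp add: sums_def)
  have l1: "?l \<le> 1 / real q" by (rule LIMSEQ_le_const2[OF lim]) (use R1_aux(1)[OF x] in auto)
  have l0: "0 \<le> ?l" using x qpos by simp
  have c1: "isCont g (lam + ?l)" using g_isCont l0 l1 by simp
  have c2: "isCont g (lam + 1 / real q - ?l)" using g_isCont l0 l1 by simp
  have A: "(\<lambda>N. g (lam + ?S N) - g lam + Lp * ((y - x) / real q ^ N)) \<longlonglongrightarrow> g (lam + ?l) - g lam + 0"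
    by (intro tendsto_intros isCont_tendsto_compose[OF c1] lim lim0)
  show "\<psi> y - \<psi> x \<le> g (lam + ?l) - g lam"
    using LIMSEQ_le_const[OF A] R1_aux(2)[OF x] by auto
  have B: "(\<lambda>N. g (lam + 1 / real q) - g (lam + 1 / real q - ?S N) - Lp * ((y - x) / real q ^ N))
      \<longlonglongrightarrow> g (lam + 1 / real q) - g (lam + 1 / real q - ?l) - 0"
    by (intro tendsto_intros isCont_tendsto_compose[OF c2] lim lim0)
  show "\<psi> y - \<psi> x \<ge> g (lam + 1 / real q) - g (lam + 1 / real q - ?l)"
    using LIMSEQ_le_const2[OF B] R1_aux(3)[OF x] by auto
qed

lemma T2:
  assumes xy: "x \<le> y" "y \<le> x + 1"
  shows "\<psi> y - \<psi> x \<le> g (lam + (y - x) / real q) - g lam + g' lam * ((y - x) / (real q * (real q - 1)))"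
    "\<psi> y - \<psi> x \<ge> g (lam + 1 / real q) - g (lam + 1 / real q - (y - x) / real q)
       + g' (lam + 1 / real q) * ((y - x) / (real q * (real q - 1)))"
proof -
  have A: "(\<lambda>N. g (lam + (y - x) / real q) - g lam + (\<Sum>n<N. g' lam * ((y - x) / real q ^ Suc (Suc n)))
      + Lp * ((y - x) / real q ^ Suc N)) \<longlonglongrightarrow>
      g (lam + (y - x) / real q) - g lam + g' lam * ((y - x) / (real q * (real q - 1))) + 0"
    using geo2[of "g' lam" "y - x"] lim0' by (intro tendsto_intros) (auto simp: sums_def)
  show "\<psi> y - \<psi> x \<le> g (lam + (y - x) / real q) - g lam + g' lam * ((y - x) / (real q * (real q - 1)))"
    using LIMSEQ_le_const[OF A] R2_aux(1)[OF xy] by auto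
  have B: "(\<lambda>N. g (lam + 1 / real q) - g (lam + 1 / real q - (y - x) / real q)
      + (\<Sum>n<N. g' (lam + 1 / real q) * ((y - x) / real q ^ Suc (Suc n))) - Lp * ((y - x) / real q ^ Suc N))
      \<longlonglongrightarrow> g (lam + 1 / real q) - g (lam + 1 / real q - (y - x) / real q)
       + g' (lam + 1 / real q) * ((y - x) / (real q * (real q - 1))) - 0"
    using geo2[of "g' (lam + 1 / real q)" "y - x"] lim0' by (intro tendsto_intros) (auto simp: sums_def)
  show "\<psi> y - \<psi> x \<ge> g (lam + 1 / real q) - g (lam + 1 / real q - (y - x) / real q)
       + g' (lam + 1 / real q) * ((y - x) / (real q * (real q - 1)))"
    using LIMSEQ_le_const2[OF B] R2_aux(2)[OF xy] by auto
qed

end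


lemma f0_tangent:
  assumes q: "q \<ge> 1" and zw: "-1/real q < z" "z \<le> w" "w < 1/real q"
  shows "f0 q z - f0 q w \<le> fd q w * (z - w)"
proof (cases "z = w")
  case True then show ?thesis by simp
next
  case False
  then have zw': "z < w" using zw by simp
  have d: "(f0 q has_real_derivative fd q x) (at x)" if "z \<le> x" "x \<le> w" for x
    using f0_deriv[OF q, of x] that zw by linarith
  obtain \<xi> where xi: "z < \<xi>" "\<xi> < w" "f0 q w - f0 q z = (w - z) * fd q \<xi>"
    using MVT2[OF zw' d] by blast
  have "fd q w \<le> fd q \<xi>" using fd_mono[OF q, of \<xi> w] xi zw by simp
  then have "(w - z) * fd q w \<le> (w - z) * fd q \<xi>" using zw' by (simp add: mult_left_mono)
  then show ?thesis using xi by (simp add: algebra_simps)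
qed

lemma f0_le_0:
  assumes q: "q \<ge> 1" and z: "-1/real q < z" "z < 1/real q"
  shows "f0 q z \<le> f0 q 0"
proof -
  have main: "f0 q z \<le> f0 q 0" if z: "-1/real q < z" "z \<le> 0" for z
  proof -
    have "0 < 1/real q" using q by simp
    then show ?thesis using f0_tangent[OF q z(1) z(2)] fd_0[of q] by simp
  qed
  show ?thesis
  proof (cases "z \<le> 0")
    case True then show ?thesis using main z by simp
  next
    case False then show ?thesis using main[of "-z"] z f0_even[of q z] by simp
  qed
qed



lemma lin_key: "Z = H + M \<Longrightarrow> F1 - F0 \<le> D * (- H) \<Longrightarrow> F1 - F0 - D * M \<le> - D * (Z::real)"
  by (simp add: algebra_simps)

theorem lemma5p4:
  fixes q :: nat and c lam \<beta> :: real and \<psi> :: "real \<Rightarrow> real"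
  assumes hq: "q \<ge> 2"
    and hlam: "- 1 / real q - c < lam" "lam < - c"
    and hS: "pre_sturmian_with q c lam \<psi> \<beta>"
  defines "\<theta> \<equiv> lam + 1 / real q + c"
    and "f \<equiv> f0 q"
  shows
   "(\<forall>x y. lam + 1 / real q \<le> x \<and> x < y \<and> y \<le> lam + 1 \<longrightarrow>
       \<psi> y - \<psi> x \<le> f (1 / real q - \<theta> - (y - x) / (real q - 1)) - f (1 / real q - \<theta>)
     \<and> f (1 / real q - \<theta> - (y - x) / (real q - 1)) - f (1 / real q - \<theta>)
          \<le> f 0 - f (1 / real q - \<theta>))
  \<and> (\<forall>x y. lam + 1 / real q - 1 \<le> y \<and> y < x \<and> x \<le> lam \<longrightarrow>
       \<psi> y - \<psi> x \<le> f (\<theta> - (x - y) / (real q - 1)) - f \<theta>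
     \<and> f (\<theta> - (x - y) / (real q - 1)) - f \<theta> \<le> f 0 - f \<theta>)
  \<and> (\<forall>x y. x < y \<and> y - x < 1 \<longrightarrow>
       \<psi> y - \<psi> x \<le> f (1 / real q - \<theta> - (y - x) / real q) - f (1 / real q - \<theta>)
            - deriv f (1 / real q - \<theta>) * ((y - x) / (real q * (real q - 1)))
     \<and> f (1 / real q - \<theta> - (y - x) / real q) - f (1 / real q - \<theta>)
            - deriv f (1 / real q - \<theta>) * ((y - x) / (real q * (real q - 1)))
          \<le> - deriv f (1 / real q - \<theta>) * ((y - x) / (real q - 1)))
  \<and> (\<forall>x y. y < x \<and> x - y < 1 \<longrightarrow>
       \<psi> y - \<psi> x \<le> f (\<theta> - (x - y) / real q) - f \<theta>
            - deriv f \<theta> * ((x - y) / (real q * (real q - 1)))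
     \<and> f (\<theta> - (x - y) / real q) - f \<theta> - deriv f \<theta> * ((x - y) / (real q * (real q - 1)))
          \<le> - deriv f \<theta> * ((x - y) / (real q - 1)))"
proof -
  from hS obtain L where per: "\<forall>x. \<psi> (x + 1) = \<psi> x" and Lip: "L-lipschitz_on UNIV \<psi>"
    and eqC: "\<forall>x\<in>Carc q lam. fc q c x + \<psi> x - \<psi> (Tmap q x) = \<beta>"
    unfolding pre_sturmian_with_def by blast
  have q1: "q \<ge> 1" using hq by simp
  have qr: "real q \<ge> 2" using hq by simp
  have th: "0 < \<theta>" "\<theta> < 1 / real q" using hlam unfolding \<theta>_def by auto
  have fdef: "f = f0 q" using f_def by simp
  have inC: "-1/real q < t + c \<and> t + c < 1/real q" if "lam \<le> t" "t \<le> lam + 1 / real q" for t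
    using that th unfolding \<theta>_def by auto
  interpret dyn2 q lam \<psi> "fc q c" \<beta> "\<lambda>t. fd q (t + c)" L
  proof
    show "2 \<le> q" by (rule hq)
    show "\<psi> (x + 1) = \<psi> x" for x using per by simp
    show "fc q c x + \<psi> x - \<psi> (frac (real q * x)) = \<beta>" if "lam \<le> x" "x \<le> lam + 1 / real q" for x
    proof -
      have "x \<in> Carc q lam" unfolding Carc_def using that by (intro CollectI exI[of _ 0]) simp
      then show ?thesis using eqC by (simp add: Tmap_def)
    qed
    show "(fc q c has_real_derivative fd q (t + c)) (at t)" if "lam \<le> t" "t \<le> lam + 1 / real q" for t
    proof -
      have "((\<lambda>t. f0 q (t + c)) has_real_derivative fd q (t + c) * 1) (at t)"
        using inC[OF that] by (intro DERIV_chain2[OF f0_deriv[OF q1]] derivative_eq_intros) auto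
      then show ?thesis by (simp add: fc_def[abs_def])
    qed
    show "continuous_on {lam..lam + 1 / real q} (\<lambda>t. fd q (t + c))"
      by (rule continuous_on_compose2[OF fd_cont[OF q1]]) (use th in \<open>auto intro!: continuous_intros simp: \<theta>_def\<close>)
    show "fd q (t + c) \<le> fd q (s + c)" if "lam \<le> s" "s \<le> t" "t \<le> lam + 1 / real q" for s t
      using fd_mono[OF q1, of "s + c" "t + c"] inC[of s] inC[of t] that by auto
    show "\<bar>\<psi> a - \<psi> b\<bar> \<le> L * \<bar>a - b\<bar>" for a b
      using lipschitz_onD[OF Lip, of a b] by (simp add: dist_real_def)
  qed
  have fcv: "fc q c t = f0 q (t + c)" for t by (simp add: fc_def)
  have e1: "lam + c = - (1 / real q - \<theta>)" unfolding \<theta>_def by simp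
  have e2: "lam + 1 / real q + c = \<theta>" unfolding \<theta>_def by simp
  have dA: "deriv f (1 / real q - \<theta>) = fd q (1 / real q - \<theta>)"
    unfolding fdef by (rule DERIV_imp_deriv, rule f0_deriv[OF q1]) (use th in auto)
  have dB: "deriv f \<theta> = fd q \<theta>"
    unfolding fdef by (rule DERIV_imp_deriv, rule f0_deriv[OF q1]) (use th in auto)
  have gl: "fd q (lam + c) = - fd q (1 / real q - \<theta>)" unfolding e1 fd_odd by simp
  have gr: "fd q (lam + 1 / real q + c) = fd q \<theta>" unfolding e2 by simp
  have qq: "real q - 1 > 0" using qr by simp
  have lsmall: "d / (real q - 1) \<le> 1 / real q" if "d \<le> 1 - 1 / real q" for d
  proof -
    have "d * real q \<le> real q - 1" using that qr by (simp add: field_simps)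
    then show ?thesis using qq qr by (simp add: field_simps)
  qed
  show ?thesis
  proof (intro conjI allI impI)
    fix x y :: real assume xy: "lam + 1 / real q \<le> x \<and> x < y \<and> y \<le> lam + 1"
    let ?l = "(y - x) / (real q - 1)"
    have l: "0 < ?l" "?l \<le> 1 / real q" using xy qq lsmall[of "y - x"] by auto
    have eqA: "lam + ?l + c = - (1 / real q - \<theta> - ?l)" using e1 by linarith
    have A: "fc q c (lam + ?l) = f (1 / real q - \<theta> - ?l)"
      unfolding fcv fdef eqA f0_even ..
    have B: "fc q c lam = f (1 / real q - \<theta>)"
      unfolding fcv fdef e1 f0_even ..
    show "\<psi> y - \<psi> x \<le> f (1 / real q - \<theta> - ?l) - f (1 / real q - \<theta>)"
      using T1(1)[of x y] xy A B by simp
    show "f (1 / real q - \<theta> - ?l) - f (1 / real q - \<theta>) \<le> f 0 - f (1 / real q - \<theta>)"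
      using f0_le_0[OF q1, of "1 / real q - \<theta> - ?l"] l th unfolding fdef by simp
  next
    fix x y :: real assume xy: "lam + 1 / real q - 1 \<le> y \<and> y < x \<and> x \<le> lam"
    let ?l = "(x - y) / (real q - 1)"
    have l: "0 < ?l" "?l \<le> 1 / real q" using xy qq lsmall[of "x - y"] by auto
    have T: "\<psi> (x + 1) - \<psi> (y + 1) \<ge> fc q c (lam + 1 / real q) - fc q c (lam + 1 / real q - ?l)"
      using T1(2)[of "y + 1" "x + 1"] xy by simp
    have eqA: "lam + 1 / real q - ?l + c = \<theta> - ?l" using e2 by linarith
    have A: "fc q c (lam + 1 / real q - ?l) = f (\<theta> - ?l)"
      unfolding fcv fdef eqA ..
    have B: "fc q c (lam + 1 / real q) = f \<theta>"
      unfolding fcv fdef e2 ..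
    show "\<psi> y - \<psi> x \<le> f (\<theta> - ?l) - f \<theta>"
      using T A B per by simp
    show "f (\<theta> - ?l) - f \<theta> \<le> f 0 - f \<theta>"
      using f0_le_0[OF q1, of "\<theta> - ?l"] l th unfolding fdef by simp
  next
    fix x y :: real assume xy: "x < y \<and> y - x < 1"
    let ?h = "(y - x) / real q"
    have h: "0 < ?h" "?h < 1 / real q" using xy qr by (auto simp: divide_strict_right_mono)
    have eqA: "lam + ?h + c = - (1 / real q - \<theta> - ?h)" using e1 by linarith
    have A: "fc q c (lam + ?h) = f (1 / real q - \<theta> - ?h)"
      unfolding fcv fdef eqA f0_even ..
    have B: "fc q c lam = f (1 / real q - \<theta>)"
      unfolding fcv fdef e1 f0_even ..
    show "\<psi> y - \<psi> x \<le> f (1 / real q - \<theta> - ?h) - f (1 / real q - \<theta>)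
            - deriv f (1 / real q - \<theta>) * ((y - x) / (real q * (real q - 1)))"
      using T2(1)[of x y] xy A B gl dA by simp
    have tg: "f (1 / real q - \<theta> - ?h) - f (1 / real q - \<theta>) \<le> fd q (1 / real q - \<theta>) * (- ?h)"
      using f0_tangent[OF q1, of "1 / real q - \<theta> - ?h" "1 / real q - \<theta>"] h th unfolding fdef by simp
    have "(y - x) / (real q - 1) = ?h + (y - x) / (real q * (real q - 1))"
      using qq qr by (simp add: field_simps)
    then show "f (1 / real q - \<theta> - ?h) - f (1 / real q - \<theta>)
            - deriv f (1 / real q - \<theta>) * ((y - x) / (real q * (real q - 1)))
          \<le> - deriv f (1 / real q - \<theta>) * ((y - x) / (real q - 1))"
      unfolding dA by (rule lin_key[OF _ tg])
  next
    fix x y :: real assume xy: "y < x \<and> x - y < 1"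
    let ?h = "(x - y) / real q"
    have h: "0 < ?h" "?h < 1 / real q" using xy qr by (auto simp: divide_strict_right_mono)
    have eqA: "lam + 1 / real q - ?h + c = \<theta> - ?h" using e2 by linarith
    have A: "fc q c (lam + 1 / real q - ?h) = f (\<theta> - ?h)"
      unfolding fcv fdef eqA ..
    have B: "fc q c (lam + 1 / real q) = f \<theta>"
      unfolding fcv fdef e2 ..
    show "\<psi> y - \<psi> x \<le> f (\<theta> - ?h) - f \<theta> - deriv f \<theta> * ((x - y) / (real q * (real q - 1)))"
      using T2(2)[of y x] xy A B gr dB by simp
    have tg: "f (\<theta> - ?h) - f \<theta> \<le> fd q \<theta> * (- ?h)"
      using f0_tangent[OF q1, of "\<theta> - ?h" \<theta>] h th unfolding fdef by simp
    have "(x - y) / (real q - 1) = ?h + (x - y) / (real q * (real q - 1))"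
      using qq qr by (simp add: field_simps)
    then show "f (\<theta> - ?h) - f \<theta> - deriv f \<theta> * ((x - y) / (real q * (real q - 1)))
          \<le> - deriv f \<theta> * ((x - y) / (real q - 1))"
      unfolding dB by (rule lin_key[OF _ tg])
  qed
qed


end
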